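(* Let $R$ be a positive integer, let $A \in \mathbb{R}^{R \times d_{\text{in}}}$ and $B \in \mathbb{R}^{d_{\text{out}} \times R}$, let $\vec{a}_i \in \mathbb{R}^{1\times d_{\text{in}}}$ denote the $i$-th row of $A$ and $\vec{b}_i \in \mathbb{R}^{d_{\text{out}}\times 1}$ the $i$-th column of $B$. For $r \in \{1,\dots,R\}$ define $f(\vec{x}; r) = \left(\sum_{i=1}^{r} \vec{b}_i \vec{a}_i\right)\vec{x}$ for $\vec{x}\in\mathbb{R}^{d_{\text{in}}}$. Let $(\vec{x},y)$ be a random pair with $\mathbb{E}[\|\vec{x}\|]<\infty$, and let $\mathcal{L}(\cdot, y)$ be a loss function that is $L_{\mathcal{L}}$-Lipschitz continuous in its first argument (with respect to the Euclidean norm on $\mathbb{R}^{d_{\text{out}}}$), uniformly in $y$. Let $E(r) = \mathbb{E}_{(\vec{x},y)}[\mathcal{L}(f(\vec{x}; r), y)]$ be the expected error at rank $r$. Then for any ranks $r_1 < r_{\text{int}} < R$, $$ |E(r_{\text{int}}) - E(r_1)| \le C \sum_{i=r_1+1}^{r_{\text{int}}} \|\vec{b}_i\|\,\|\vec{a}_i\|, $$ where $C = L_{\mathcal{L}} \cdot \mathbb{E}[\|\vec{x}\|]$.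
   Context: $\|\cdot\|$ denotes the Euclidean norm of a vector (row or column). The map $f(\cdot; r)$ is the output of a "nested subspace" linear layer truncated to rank $r$, i.e. using the weight matrix $W_r = B_r A_r$ where $A_r$ consists of the first $r$ rows of $A$ and $B_r$ of the first $r$ columns of $B$. *)

theory Defs
  imports "HOL-Analysis.Analysis" "HOL-Probability.Probability"
begin

text \<open>Truncated weight matrix W_r = B_r A_r = sum_{i=1}^r b_i a_i, where a i is the
  i-th row of A (i = 1..R) and b i the i-th column of B.\<close>
definition trunc_weight ::
  "(nat \<Rightarrow> real^'din) \<Rightarrow> (nat \<Rightarrow> real^'dout) \<Rightarrow> nat \<Rightarrow> real^'din^'dout" where
  "trunc_weight a b r = (\<Sum>i\<in>{1..r}. (\<chi> j k. (b i) $ j * (a i) $ k))"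

definition nested_layer ::
  "(nat \<Rightarrow> real^'din) \<Rightarrow> (nat \<Rightarrow> real^'dout) \<Rightarrow> real^'din \<Rightarrow> nat \<Rightarrow> real^'dout" where
  "nested_layer a b x r = trunc_weight a b r *v x"

end

theory Submission
  imports Defs
begin

lemma outer_mv: "(\<chi> j k. (b::real^'m) $ j * (a::real^'n) $ k) *v x = (a \<bullet> x) *\<^sub>R b"
  by (simp add: vec_eq_iff matrix_vector_mult_def inner_vec_def sum_distrib_left mult.commute mult.left_commute)

lemma mv_sum: "finite S \<Longrightarrow> (sum f S) *v (x::real^'n) = sum (\<lambda>i. f i *v x) S"
  by (induction S rule: finite_induct) (auto simp: matrix_vector_mult_add_rdistrib)

lemma nl_eq: "nested_layer a b x r = (\<Sum>i\<in>{1..r}. (a i \<bullet> x) *\<^sub>R b i)"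
  unfolding nested_layer_def trunc_weight_def by (simp add: mv_sum outer_mv)

lemma nl_diff:
  assumes "r1 < rint"
  shows "norm (nested_layer a b x rint - nested_layer a b x r1)
         \<le> (\<Sum>i\<in>{r1+1..rint}. norm (b i) * norm (a i)) * norm x"
proof -
  have "{1..rint} = {1..r1} \<union> {r1+1..rint}" using assms by auto
  then have "nested_layer a b x rint - nested_layer a b x r1 = (\<Sum>i\<in>{r1+1..rint}. (a i \<bullet> x) *\<^sub>R b i)"
    unfolding nl_eq by (simp add: sum.union_disjoint ivl_disj_int)
  also have "norm \<dots> \<le> (\<Sum>i\<in>{r1+1..rint}. norm ((a i \<bullet> x) *\<^sub>R b i))" by (rule norm_sum)
  also have "\<dots> \<le> (\<Sum>i\<in>{r1+1..rint}. norm (b i) * norm (a i) * norm x)"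
  proof (rule sum_mono)
    fix i
    have "\<bar>a i \<bullet> x\<bar> \<le> norm (a i) * norm x" by (rule Cauchy_Schwarz_ineq2)
    then show "norm ((a i \<bullet> x) *\<^sub>R b i) \<le> norm (b i) * norm (a i) * norm x"
      using mult_left_mono[OF _ norm_ge_zero, of "\<bar>a i \<bullet> x\<bar>" "norm (a i) * norm x" "b i"]
      by (simp add: mult.commute mult.left_commute)
  qed
  also have "\<dots> = (\<Sum>i\<in>{r1+1..rint}. norm (b i) * norm (a i)) * norm x"
    by (simp add: sum_distrib_right)
  finally show ?thesis .
qed

theorem proposition1:
  fixes M :: "'w measure"
    and a :: "nat \<Rightarrow> real^'din" and b :: "nat \<Rightarrow> real^'dout"
    and R :: nat
    and X :: "'w \<Rightarrow> real^'din" and Y :: "'w \<Rightarrow> 'y"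
    and Loss :: "real^'dout \<Rightarrow> 'y \<Rightarrow> real" and LL :: real
    and r1 rint :: nat
  assumes "prob_space M"
    and "R > 0"
    and "X \<in> borel_measurable M"
    and "integrable M (\<lambda>\<omega>. norm (X \<omega>))"
    and "\<And>r. (\<lambda>\<omega>. Loss (nested_layer a b (X \<omega>) r) (Y \<omega>)) \<in> borel_measurable M"
    and "\<And>y. LL-lipschitz_on UNIV (\<lambda>u. Loss u y)"
    and "1 \<le> r1" and "r1 < rint" and "rint < R"
  shows "\<bar>(\<integral>\<omega>. Loss (nested_layer a b (X \<omega>) rint) (Y \<omega>) \<partial>M)
           - (\<integral>\<omega>. Loss (nested_layer a b (X \<omega>) r1) (Y \<omega>) \<partial>M)\<bar>
         \<le> (LL * (\<integral>\<omega>. norm (X \<omega>) \<partial>M)) * (\<Sum>i\<in>{r1+1..rint}. norm (b i) * norm (a i))"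
proof -
  define S where "S = (\<Sum>i\<in>{r1+1..rint}. norm (b i) * norm (a i))"
  define g where "g = (\<lambda>\<omega>. Loss (nested_layer a b (X \<omega>) rint) (Y \<omega>))"
  define h where "h = (\<lambda>\<omega>. Loss (nested_layer a b (X \<omega>) r1) (Y \<omega>))"
  have LL0: "0 \<le> LL" using assms(6) lipschitz_on_nonneg by blast
  have S0: "0 \<le> S" unfolding S_def by (auto intro!: sum_nonneg)
  have EX0: "0 \<le> (\<integral>\<omega>. norm (X \<omega>) \<partial>M)" by simp
  have pw: "norm (g \<omega> - h \<omega>) \<le> LL * S * norm (X \<omega>)" for \<omega>
  proof -
    have "dist (g \<omega>) (h \<omega>) \<le> LL * dist (nested_layer a b (X \<omega>) rint) (nested_layer a b (X \<omega>) r1)"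
      unfolding g_def h_def using lipschitz_onD[OF assms(6)] by blast
    also have "\<dots> \<le> LL * (S * norm (X \<omega>))"
      using nl_diff[OF assms(8), of a b "X \<omega>"] LL0 unfolding S_def dist_norm
      by (intro mult_left_mono) auto
    finally show ?thesis by (simp add: dist_norm mult.assoc)
  qed
  have gm: "g \<in> borel_measurable M" and hm: "h \<in> borel_measurable M"
    unfolding g_def h_def using assms(5) by auto
  have bint: "integrable M (\<lambda>\<omega>. LL * S * norm (X \<omega>))" using assms(4) by simp
  have dint: "integrable M (\<lambda>\<omega>. g \<omega> - h \<omega>)"
    by (rule Bochner_Integration.integrable_bound[OF bint]) (use gm hm pw LL0 S0 in \<open>auto simp: abs_mult\<close>)
  have RHS0: "0 \<le> (LL * (\<integral>\<omega>. norm (X \<omega>) \<partial>M)) * S" using LL0 S0 EX0 by simp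
  show ?thesis
  proof (cases "integrable M g")
    case True
    then have hi: "integrable M h"
      using Bochner_Integration.integrable_diff[OF True dint] by simp
    have "\<bar>integral\<^sup>L M g - integral\<^sup>L M h\<bar> = \<bar>\<integral>\<omega>. g \<omega> - h \<omega> \<partial>M\<bar>"
      using True hi by simp
    also have "\<dots> \<le> (\<integral>\<omega>. \<bar>g \<omega> - h \<omega>\<bar> \<partial>M)" by (rule integral_abs_bound)
    also have "\<dots> \<le> (\<integral>\<omega>. LL * S * norm (X \<omega>) \<partial>M)"
      using pw by (intro integral_mono dint bint) (auto intro: integrable_abs[OF dint])
    also have "\<dots> = (LL * (\<integral>\<omega>. norm (X \<omega>) \<partial>M)) * S" by simp
    finally show ?thesis unfolding S_def g_def h_def .
  next
    case False
    have hi: "\<not> integrable M h"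
    proof
      assume "integrable M h"
      then have "integrable M (\<lambda>\<omega>. (g \<omega> - h \<omega>) + h \<omega>)"
        using Bochner_Integration.integrable_add[OF dint \<open>integrable M h\<close>] by simp
      then show False using False by simp
    qed
    have "integral\<^sup>L M g = 0" "integral\<^sup>L M h = 0"
      using False hi by (simp_all add: not_integrable_integral_eq)
    then show ?thesis using RHS0 unfolding S_def g_def h_def by simp
  qed
qed

end
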